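(* Let $0<a<1$, $a_N=a\ln N/N$, and let $S=S(N)$ be integers with $N+S(N)\ge0$ and $S=o(N/\ln N)$. For integers $K\ge0$ let $\langle n_0\rangle_{K,a_N}$ denote the expectation of $n_0$ under the probability on sequences $(n_j)_{j\ge0}$ of nonnegative integers with $\sum_jn_j=K$ proportional to $e^{-a_N\sum_jjn_j}$. Then $$\lim_{N\to\infty}N^{-a}\langle n_0\rangle_{N+S,a_N}=1 .$$
   Context: This is the canonical ensemble of $N+S$ noninteracting bosons in a one-dimensional harmonic trap whose scaled level spacing parameter is $a_N$. *)

theory Defs
  imports "HOL-Analysis.Analysis" "HOL-Library.Landau_Symbols"
begin

definition configs :: "nat \<Rightarrow> (nat \<Rightarrow> nat) set" where
  "configs K = {n. finite {j. n j \<noteq> 0} \<and> (\<Sum>j\<in>{j. n j \<noteq> 0}. n j) = K}"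

definition energy :: "(nat \<Rightarrow> nat) \<Rightarrow> nat" where
  "energy n = (\<Sum>j\<in>{j. n j \<noteq> 0}. j * n j)"

definition part_fun :: "nat \<Rightarrow> real \<Rightarrow> real" where
  "part_fun K b = infsum (\<lambda>n. exp (- b * real (energy n))) (configs K)"

definition mean_n0 :: "nat \<Rightarrow> real \<Rightarrow> real" where
  "mean_n0 K b =
     infsum (\<lambda>n. real (n 0) * exp (- b * real (energy n))) (configs K) / part_fun K b"

end

theory Submission
  imports Defs "HOL-Real_Asymp.Real_Asymp"
begin


definition inc0 :: "(nat \<Rightarrow> nat) \<Rightarrow> nat \<Rightarrow> nat" where
  "inc0 m = m(0 := Suc (m 0))"
definition shiftc :: "(nat \<Rightarrow> nat) \<Rightarrow> nat \<Rightarrow> nat" where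
  "shiftc m = (\<lambda>j. case j of 0 \<Rightarrow> 0 | Suc i \<Rightarrow> m i)"

lemma cnt_D:
  assumes "finite D" "{j. n j \<noteq> 0} \<subseteq> D"
  shows "(\<Sum>j\<in>{j. n j \<noteq> 0}. n j) = sum n D"
  by (rule sum.mono_neutral_left) (use assms in auto)

lemma en_D:
  assumes "finite D" "{j. n j \<noteq> 0} \<subseteq> D"
  shows "energy n = (\<Sum>j\<in>D. j * n j)"
  unfolding energy_def by (rule sum.mono_neutral_left) (use assms in auto)

lemma supp_inc0: "{j. inc0 m j \<noteq> 0} = insert 0 {j. m j \<noteq> 0}"
  by (auto simp: inc0_def)

lemma inc0_configs: "inc0 m \<in> configs (Suc k) \<longleftrightarrow> m \<in> configs k"
proof (cases "finite {j. m j \<noteq> 0}")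
  case True
  define D where "D = insert 0 {j. m j \<noteq> 0}"
  have fD: "finite D" using True by (simp add: D_def)
  have "(\<Sum>j\<in>{j. inc0 m j \<noteq> 0}. inc0 m j) = sum (inc0 m) D"
    by (rule cnt_D[OF fD]) (auto simp: D_def inc0_def)
  also have "\<dots> = inc0 m 0 + sum (inc0 m) (D - {0})"
    by (rule sum.remove) (use fD in \<open>auto simp: D_def\<close>)
  also have "sum (inc0 m) (D - {0}) = sum m (D - {0})"
    by (rule sum.cong) (auto simp: inc0_def)
  also have "inc0 m 0 + sum m (D - {0}) = Suc (sum m D)"
    using sum.remove[OF fD, of 0 m] by (simp add: D_def inc0_def)
  also have "sum m D = (\<Sum>j\<in>{j. m j \<noteq> 0}. m j)"
    by (rule cnt_D[symmetric, OF fD]) (auto simp: D_def)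
  finally show ?thesis using True unfolding configs_def mem_Collect_eq supp_inc0 by simp
next
  case False
  then show ?thesis unfolding configs_def mem_Collect_eq supp_inc0 by simp
qed

lemma energy_inc0:
  assumes "finite {j. m j \<noteq> 0}"
  shows "energy (inc0 m) = energy m"
proof -
  define D where "D = insert 0 {j. m j \<noteq> 0}"
  have fD: "finite D" using assms by (simp add: D_def)
  have "energy (inc0 m) = (\<Sum>j\<in>D. j * inc0 m j)"
    by (rule en_D[OF fD]) (auto simp: D_def inc0_def)
  also have "\<dots> = (\<Sum>j\<in>D. j * m j)"
    by (rule sum.cong) (auto simp: inc0_def)
  also have "\<dots> = energy m"
    by (rule en_D[symmetric, OF fD]) (auto simp: D_def)
  finally show ?thesis .
qed

lemma inj_inc0: "inj inc0"
proof (rule injI)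
  fix x y assume "inc0 x = inc0 y"
  then have h: "\<And>j. inc0 x j = inc0 y j" by simp
  show "x = y"
  proof
    fix j show "x j = y j" using h[of j] by (cases j) (auto simp: inc0_def)
  qed
qed

lemma A_eq: "{n \<in> configs (Suc k). n 0 \<noteq> 0} = inc0 ` configs k"
proof
  show "inc0 ` configs k \<subseteq> {n \<in> configs (Suc k). n 0 \<noteq> 0}"
    by (auto simp: inc0_configs) (simp add: inc0_def)
next
  show "{n \<in> configs (Suc k). n 0 \<noteq> 0} \<subseteq> inc0 ` configs k"
  proof
    fix n assume n: "n \<in> {n \<in> configs (Suc k). n 0 \<noteq> 0}"
    define m where "m = n(0 := n 0 - 1)"
    have "n = inc0 m" using n by (auto simp: m_def inc0_def)
    moreover then have "m \<in> configs k" using n inc0_configs by auto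
    ultimately show "n \<in> inc0 ` configs k" by blast
  qed
qed

lemma supp_shiftc: "{j. shiftc m j \<noteq> 0} = Suc ` {j. m j \<noteq> 0}"
  by (auto simp: shiftc_def split: nat.splits) (metis Suc_pred' gr0I image_iff mem_Collect_eq)

lemma shiftc_configs: "shiftc m \<in> configs k \<longleftrightarrow> m \<in> configs k"
proof -
  have "(\<Sum>j\<in>Suc ` {j. m j \<noteq> 0}. shiftc m j) = (\<Sum>j\<in>{j. m j \<noteq> 0}. m j)"
    by (subst sum.reindex) (auto simp: shiftc_def)
  then show ?thesis
    unfolding configs_def mem_Collect_eq supp_shiftc by (simp add: finite_image_iff)
qed

lemma energy_shiftc:
  assumes "m \<in> configs k"
  shows "energy (shiftc m) = energy m + k"
proof -
  have "energy (shiftc m) = (\<Sum>j\<in>Suc ` {j. m j \<noteq> 0}. j * shiftc m j)"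
    unfolding energy_def supp_shiftc ..
  also have "\<dots> = (\<Sum>j\<in>{j. m j \<noteq> 0}. Suc j * m j)"
    by (subst sum.reindex) (auto simp: shiftc_def)
  also have "\<dots> = energy m + (\<Sum>j\<in>{j. m j \<noteq> 0}. m j)"
    by (simp add: energy_def sum.distrib)
  finally show ?thesis using assms by (simp add: configs_def)
qed

lemma inj_shiftc: "inj shiftc"
proof (rule injI)
  fix x y assume "shiftc x = shiftc y"
  then have h: "\<And>j. shiftc x j = shiftc y j" by simp
  show "x = y"
  proof
    fix j show "x j = y j" using h[of "Suc j"] by (simp add: shiftc_def)
  qed
qed

lemma B_eq: "{n \<in> configs k. n 0 = 0} = shiftc ` configs k"
proof
  show "shiftc ` configs k \<subseteq> {n \<in> configs k. n 0 = 0}"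
    by (auto simp: shiftc_configs) (simp add: shiftc_def)
next
  show "{n \<in> configs k. n 0 = 0} \<subseteq> shiftc ` configs k"
  proof
    fix n assume n: "n \<in> {n \<in> configs k. n 0 = 0}"
    define m where "m = (\<lambda>j. n (Suc j))"
    have "n = shiftc m" using n by (auto simp: m_def shiftc_def split: nat.splits)
    moreover then have "m \<in> configs k" using n shiftc_configs by auto
    ultimately show "n \<in> shiftc ` configs k" by blast
  qed
qed

lemma configs0: "configs 0 = {\<lambda>_. 0}"
  by (auto simp: configs_def)


definition wt :: "real \<Rightarrow> (nat \<Rightarrow> nat) \<Rightarrow> real" where
  "wt b n = exp (- b * real (energy n))"

fun bnd :: "real \<Rightarrow> nat \<Rightarrow> real" where
  "bnd b 0 = 1"
| "bnd b (Suc k) = bnd b k / (1 - exp (- b * real (Suc k)))"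

lemma bnd_pos: "b > 0 \<Longrightarrow> bnd b k > 0"
  by (induction k) (auto intro!: divide_pos_pos)

lemma wt_inc0: "m \<in> configs k \<Longrightarrow> wt b (inc0 m) = wt b m"
  by (simp add: wt_def energy_inc0 configs_def)

lemma wt_shiftc: "m \<in> configs k \<Longrightarrow> wt b (shiftc m) = exp (- b * real k) * wt b m"
  by (simp add: wt_def energy_shiftc algebra_simps flip: exp_add)
lemma fin_bound:
  assumes b: "b > 0"
  shows "\<forall>E F. finite F \<longrightarrow> F \<subseteq> configs k \<longrightarrow> (\<forall>n\<in>F. energy n \<le> E) \<longrightarrow> sum (wt b) F \<le> bnd b k"
proof (induction k)
  case 0
  show ?case
  proof (intro allI impI)
    fix E F assume F: "finite F" "F \<subseteq> configs 0"
    have "sum (wt b) F \<le> sum (wt b) {\<lambda>_. 0}"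
      using F by (intro sum_mono2) (auto simp: configs0 wt_def)
    also have "\<dots> = 1" by (simp add: wt_def energy_def)
    finally show "sum (wt b) F \<le> bnd b 0" by simp
  qed
next
  case (Suc k)
  define e where "e = exp (- b * real (Suc k))"
  have e: "0 < e" "e < 1" using b by (auto simp: e_def)
  have bS: "bnd b (Suc k) = bnd b k / (1 - e)" by (simp add: e_def)
  have main: "\<And>F. finite F \<Longrightarrow> F \<subseteq> configs (Suc k) \<Longrightarrow> (\<forall>n\<in>F. energy n \<le> E) \<Longrightarrow> sum (wt b) F \<le> bnd b (Suc k)" for E
  proof (induction E rule: less_induct)
    case (less E F)
    have split: "sum (wt b) F = sum (wt b) (F \<inter> {n. n 0 \<noteq> 0}) + sum (wt b) (F - {n. n 0 \<noteq> 0})"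
      using less.prems(1) by (rule sum.Int_Diff)
    have "F \<inter> {n. n 0 \<noteq> 0} \<subseteq> {n \<in> configs (Suc k). n 0 \<noteq> 0}"
      using less.prems(2) by auto
    then have "F \<inter> {n. n 0 \<noteq> 0} \<subseteq> inc0 ` configs k"
      unfolding A_eq .
    then obtain G where G: "G \<subseteq> configs k" "F \<inter> {n. n 0 \<noteq> 0} = inc0 ` G"
      by (rule subset_imageE)
    have fG: "finite G"
    proof (rule finite_imageD)
      show "finite (inc0 ` G)" unfolding G(2)[symmetric] using less.prems(1) by simp
      show "inj_on inc0 G" using inj_inc0 by (rule inj_on_subset) simp
    qed
    have "sum (wt b) (F \<inter> {n. n 0 \<noteq> 0}) = sum (wt b \<circ> inc0) G"
      unfolding G(2) by (rule sum.reindex) (rule inj_on_subset[OF inj_inc0], simp)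
    also have "\<dots> = sum (wt b) G"
      using G(1) by (intro sum.cong) (auto simp: wt_inc0)
    also have "\<dots> \<le> bnd b k"
    proof -
      have "\<forall>n\<in>G. energy n \<le> sum energy G"
        using fG by (auto intro: member_le_sum)
      then show ?thesis using Suc.IH fG G(1) by blast
    qed
    finally have s1: "sum (wt b) (F \<inter> {n. n 0 \<noteq> 0}) \<le> bnd b k" .
    have "F - {n. n 0 \<noteq> 0} \<subseteq> {n \<in> configs (Suc k). n 0 = 0}"
      using less.prems(2) by auto
    then have "F - {n. n 0 \<noteq> 0} \<subseteq> shiftc ` configs (Suc k)"
      unfolding B_eq .
    then obtain H where H: "H \<subseteq> configs (Suc k)" "F - {n. n 0 \<noteq> 0} = shiftc ` H"
      by (rule subset_imageE)
    have fH: "finite H"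
    proof (rule finite_imageD)
      show "finite (shiftc ` H)" unfolding H(2)[symmetric] using less.prems(1) by simp
      show "inj_on shiftc H" using inj_shiftc by (rule inj_on_subset) simp
    qed
    have "sum (wt b) (F - {n. n 0 \<noteq> 0}) = sum (wt b \<circ> shiftc) H"
      unfolding H(2) by (rule sum.reindex) (rule inj_on_subset[OF inj_shiftc], simp)
    also have "\<dots> = sum (\<lambda>m. e * wt b m) H"
      using H(1) by (intro sum.cong) (auto simp: wt_shiftc e_def)
    also have "\<dots> = e * sum (wt b) H" by (simp add: sum_distrib_left)
    also have "\<dots> \<le> e * bnd b (Suc k)"
    proof (cases "H = {}")
      case True then show ?thesis using bnd_pos[OF b, of "Suc k"] e by (simp del: bnd.simps)
    next
      case False
      then obtain m where m: "m \<in> H" by blast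
      have "shiftc m \<in> F" using H(2) m by blast
      then have "energy (shiftc m) \<le> E" using less.prems(3) by blast
      then have EE: "Suc k \<le> E" using energy_shiftc[of m "Suc k"] H(1) m by auto
      have "\<forall>n\<in>H. energy n \<le> E - Suc k"
      proof
        fix n assume n: "n \<in> H"
        have "shiftc n \<in> F" using H(2) n by blast
        then have "energy (shiftc n) \<le> E" using less.prems(3) by blast
        then show "energy n \<le> E - Suc k" using energy_shiftc[of n "Suc k"] H(1) n by auto
      qed
      then have "sum (wt b) H \<le> bnd b (Suc k)"
        using less.IH[of "E - Suc k" H] EE fH H(1) by auto
      then show ?thesis using e by (intro mult_left_mono) auto
    qed
    finally have s2: "sum (wt b) (F - {n. n 0 \<noteq> 0}) \<le> e * bnd b (Suc k)" .
    have "bnd b k + e * bnd b (Suc k) = bnd b (Suc k)"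
      unfolding bS using e by (simp add: field_simps del: bnd.simps)
    then show ?case using split s1 s2 by linarith
  qed
  then show ?case by blast
qed

lemma wt_summable:
  assumes b: "b > 0"
  shows "wt b summable_on configs k"
proof (rule nonneg_bdd_above_summable_on)
  show "\<And>x. x \<in> configs k \<Longrightarrow> 0 \<le> wt b x" by (simp add: wt_def)
  show "bdd_above (sum (wt b) ` {F. F \<subseteq> configs k \<and> finite F})"
  proof (rule bdd_aboveI)
    fix x assume "x \<in> sum (wt b) ` {F. F \<subseteq> configs k \<and> finite F}"
    then obtain F where F: "F \<subseteq> configs k" "finite F" "x = sum (wt b) F" by blast
    have "\<forall>n\<in>F. energy n \<le> sum energy F"
      using F(2) by (auto intro: member_le_sum)
    then show "x \<le> bnd b k" using fin_bound[OF b, of k] F by blast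
  qed
qed



lemma part_fun_wt: "part_fun k b = infsum (wt b) (configs k)"
  unfolding part_fun_def wt_def ..

lemma hasZ: "b > 0 \<Longrightarrow> (wt b has_sum part_fun k b) (configs k)"
  unfolding part_fun_wt by (rule has_sum_infsum[OF wt_summable])

lemma configs_split1:
  "configs (Suc k) = inc0 ` configs k \<union> shiftc ` configs (Suc k)"
proof -
  have "configs (Suc k) = {n \<in> configs (Suc k). n 0 \<noteq> 0} \<union> {n \<in> configs (Suc k). n 0 = 0}"
    by auto
  then show ?thesis unfolding A_eq B_eq .
qed

lemma configs_split2:
  "inc0 ` configs k \<inter> shiftc ` configs (Suc k) = {}"
proof -
  have "{n \<in> configs (Suc k). n 0 \<noteq> 0} \<inter> {n \<in> configs (Suc k). n 0 = 0} = {}"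
    by auto
  then show ?thesis unfolding A_eq B_eq .
qed

lemmas configs_split = configs_split1 configs_split2

lemma Z0: "part_fun 0 b = 1"
  unfolding part_fun_wt configs0 by (simp add: wt_def energy_def)

lemma Z_rec:
  assumes b: "b > 0"
  shows "part_fun (Suc k) b = part_fun k b + exp (- b * real (Suc k)) * part_fun (Suc k) b"
proof -
  have h1: "(wt b has_sum part_fun k b) (inc0 ` configs k)"
  proof (subst has_sum_reindex)
    show "inj_on inc0 (configs k)" using inj_inc0 by (rule inj_on_subset) simp
    show "(wt b \<circ> inc0 has_sum part_fun k b) (configs k)"
    proof -
      have "(wt b \<circ> inc0 has_sum part_fun k b) (configs k) \<longleftrightarrow> (wt b has_sum part_fun k b) (configs k)"
        by (rule has_sum_cong) (metis comp_apply wt_inc0)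
      then show ?thesis using hasZ[OF b, of k] by simp
    qed
  qed
  have h2: "(wt b has_sum exp (- b * real (Suc k)) * part_fun (Suc k) b) (shiftc ` configs (Suc k))"
  proof (subst has_sum_reindex)
    show "inj_on shiftc (configs (Suc k))" using inj_shiftc by (rule inj_on_subset) simp
    show "(wt b \<circ> shiftc has_sum exp (- b * real (Suc k)) * part_fun (Suc k) b) (configs (Suc k))"
    proof -
      have "(wt b \<circ> shiftc has_sum exp (- b * real (Suc k)) * part_fun (Suc k) b) (configs (Suc k)) \<longleftrightarrow> ((\<lambda>m. exp (- b * real (Suc k)) * wt b m) has_sum exp (- b * real (Suc k)) * part_fun (Suc k) b) (configs (Suc k))"
        by (rule has_sum_cong) (metis comp_apply wt_shiftc)
      then show ?thesis using has_sum_cmult_right[OF hasZ[OF b, of "Suc k"], of "exp (- b * real (Suc k))"] by simp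
    qed
  qed
  have "(wt b has_sum part_fun k b + exp (- b * real (Suc k)) * part_fun (Suc k) b) (configs (Suc k))"
    by (subst configs_split(1)) (rule has_sum_Un_disjoint[OF h1 h2 configs_split(2)])
  then show ?thesis using hasZ[OF b, of "Suc k"] by (metis has_sum_unique)
qed

definition fw :: "real \<Rightarrow> (nat \<Rightarrow> nat) \<Rightarrow> real" where
  "fw b n = real (n 0) * wt b n"

lemma hasT:
  assumes b: "b > 0"
  shows "(fw b has_sum (\<Sum>j<k. part_fun j b)) (configs k)"
proof (induction k)
  case 0
  show ?case unfolding configs0 lessThan_0 sum.empty by (rule has_sum_0) (simp add: fw_def)
next
  case (Suc k)
  have h1: "(fw b has_sum (\<Sum>j<k. part_fun j b) + part_fun k b) (inc0 ` configs k)"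
  proof (subst has_sum_reindex)
    show "inj_on inc0 (configs k)" using inj_inc0 by (rule inj_on_subset) simp
    show "(fw b \<circ> inc0 has_sum (\<Sum>j<k. part_fun j b) + part_fun k b) (configs k)"
    proof -
      have "(fw b \<circ> inc0 has_sum (\<Sum>j<k. part_fun j b) + part_fun k b) (configs k) \<longleftrightarrow> ((\<lambda>m. fw b m + wt b m) has_sum (\<Sum>j<k. part_fun j b) + part_fun k b) (configs k)"
      proof (rule has_sum_cong)
        fix m assume "m \<in> configs k"
        then have "wt b (inc0 m) = wt b m" by (rule wt_inc0)
        then show "(fw b \<circ> inc0) m = fw b m + wt b m"
          by (simp add: fw_def inc0_def algebra_simps)
      qed
      then show ?thesis using has_sum_add[OF Suc.IH hasZ[OF b, of k]] by simp
    qed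
  qed
  have h2: "(fw b has_sum 0) (shiftc ` configs (Suc k))"
    by (rule has_sum_0) (auto simp: fw_def shiftc_def)
  have "(fw b has_sum (\<Sum>j<k. part_fun j b) + part_fun k b + 0) (configs (Suc k))"
    by (subst configs_split(1)) (rule has_sum_Un_disjoint[OF h1 h2 configs_split(2)])
  then show ?case by simp
qed

lemma mean_eq:
  assumes b: "b > 0"
  shows "mean_n0 K b = (\<Sum>j<K. part_fun j b) / part_fun K b"
proof -
  have "infsum (\<lambda>n. real (n 0) * exp (- b * real (energy n))) (configs K) = (\<Sum>j<K. part_fun j b)"
    using hasT[OF b, of K] unfolding fw_def wt_def by (rule infsumI)
  then show ?thesis unfolding mean_n0_def by simp
qed



lemma Z_step:
  assumes b: "b > 0"
  shows "part_fun k b = (1 - exp (- b * real (Suc k))) * part_fun (Suc k) b"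
  using Z_rec[OF b, of k] by (simp add: algebra_simps)

lemma Z_pos:
  assumes b: "b > 0"
  shows "part_fun k b > 0"
proof (induction k)
  case 0 then show ?case by (simp add: Z0)
next
  case (Suc k)
  have e: "exp (- b * real (Suc k)) < 1" using b by simp
  show ?case using Suc Z_step[OF b, of k] e
    by (metis diff_gt_0_iff_gt zero_less_mult_pos)
qed

lemma Z_up:
  assumes b: "b > 0" and d: "d \<le> K"
  shows "part_fun (K - d) b \<le> (1 - exp (- b * real K)) ^ d * part_fun K b"
  using d
proof (induction d)
  case 0 then show ?case by simp
next
  case (Suc d)
  have KK: "K - d = Suc (K - Suc d)" using Suc.prems by simp
  have "part_fun (K - Suc d) b = (1 - exp (- b * real (K - d))) * part_fun (K - d) b"
    using Z_step[OF b, of "K - Suc d"] KK by simp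
  also have "\<dots> \<le> (1 - exp (- b * real K)) * part_fun (K - d) b"
  proof (rule mult_right_mono)
    show "0 \<le> part_fun (K - d) b" using Z_pos[OF b] less_imp_le by blast
    have "real (K - d) \<le> real K" by simp
    then have "- b * real K \<le> - b * real (K - d)" using b by simp
    then show "1 - exp (- b * real (K - d)) \<le> 1 - exp (- b * real K)" by simp
  qed
  also have "\<dots> \<le> (1 - exp (- b * real K)) * ((1 - exp (- b * real K)) ^ d * part_fun K b)"
  proof (rule mult_left_mono)
    show "part_fun (K - d) b \<le> (1 - exp (- b * real K)) ^ d * part_fun K b" using Suc by simp
    have "- b * real K \<le> 0" using b by simp
    then show "0 \<le> 1 - exp (- b * real K)" by simp
  qed
  finally show ?case by (simp add: algebra_simps)
qed

lemma Z_low: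
  assumes b: "b > 0" and d: "d \<le> M" and M: "M \<le> K"
  shows "(1 - exp (- b * real (K - M))) ^ d * part_fun K b \<le> part_fun (K - d) b"
  using d
proof (induction d)
  case 0 then show ?case by simp
next
  case (Suc d)
  have KK: "K - d = Suc (K - Suc d)" using Suc.prems M by simp
  have y0: "0 \<le> 1 - exp (- b * real (K - M))" using b by simp
  have "(1 - exp (- b * real (K - M))) ^ Suc d * part_fun K b
      = (1 - exp (- b * real (K - M))) * ((1 - exp (- b * real (K - M))) ^ d * part_fun K b)"
    by simp
  also have "\<dots> \<le> (1 - exp (- b * real (K - M))) * part_fun (K - d) b"
    using Suc y0 by (intro mult_left_mono) auto
  also have "\<dots> \<le> (1 - exp (- b * real (K - d))) * part_fun (K - d) b"
  proof (rule mult_right_mono)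
    show "0 \<le> part_fun (K - d) b" using Z_pos[OF b] less_imp_le by blast
    have "real (K - M) \<le> real (K - d)" using Suc.prems by simp
    then have "- b * real (K - d) \<le> - b * real (K - M)" using b by simp
    then show "1 - exp (- b * real (K - M)) \<le> 1 - exp (- b * real (K - d))" by simp
  qed
  also have "\<dots> = part_fun (K - Suc d) b"
    using Z_step[OF b, of "K - Suc d"] KK by simp
  finally show ?case .
qed

lemma mean_upper:
  assumes b: "b > 0"
  shows "mean_n0 K b \<le> exp (b * real K)"
proof -
  define x where "x = exp (- b * real K)"
  have x: "0 < x" "x \<le> 1" using b by (auto simp: x_def)
  have ZK: "part_fun K b > 0" using Z_pos[OF b] by blast
  have "(\<Sum>j<K. part_fun j b) = (\<Sum>i<K. part_fun (K - Suc i) b)"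
    by (rule sum.nat_diff_reindex[symmetric])
  also have "\<dots> \<le> (\<Sum>i<K. (1 - x) ^ Suc i * part_fun K b)"
  proof (rule sum_mono)
    fix i assume "i \<in> {..<K}"
    then show "part_fun (K - Suc i) b \<le> (1 - x) ^ Suc i * part_fun K b"
      unfolding x_def by (intro Z_up[OF b]) simp
  qed
  also have "\<dots> = (1 - x) * (\<Sum>i<K. (1 - x) ^ i) * part_fun K b"
    by (simp add: sum_distrib_left sum_distrib_right algebra_simps)
  also have "\<dots> \<le> 1 * (1 / x) * part_fun K b"
  proof (rule mult_right_mono[OF mult_mono])
    show "(\<Sum>i<K. (1 - x) ^ i) \<le> 1 / x"
    proof -
      have "(\<Sum>i<K. (1 - x) ^ i) = (1 - (1 - x) ^ K) / x"
        using x by (simp add: sum_gp_strict)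
      also have "\<dots> \<le> 1 / x" using x by (intro divide_right_mono) auto
      finally show ?thesis .
    qed
  qed (use x ZK in \<open>auto intro: sum_nonneg\<close>)
  finally have "(\<Sum>j<K. part_fun j b) \<le> part_fun K b / x" by simp
  then have "mean_n0 K b \<le> 1 / x"
    using ZK by (simp add: mean_eq[OF b] field_simps)
  then show ?thesis by (simp add: x_def exp_minus field_simps)
qed

lemma mean_lower:
  assumes b: "b > 0" and M: "M \<le> K"
  defines "y \<equiv> exp (- b * real (K - M))"
  shows "(1 - y) * (1 - exp (- y * real M)) / y \<le> mean_n0 K b"
proof -
  have y: "0 < y" "y \<le> 1" using b by (auto simp: y_def)
  have ZK: "part_fun K b > 0" using Z_pos[OF b] by blast
  have "(1 - y) * (1 - exp (- y * real M)) / y \<le> (1 - y) * (1 - (1 - y) ^ M) / y"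
  proof -
    have "1 - y \<le> exp (- y)" using exp_ge_add_one_self[of "- y"] by simp
    then have "(1 - y) ^ M \<le> exp (- y) ^ M" using y by (intro power_mono) auto
    also have "\<dots> = exp (- y * real M)" by (simp add: exp_of_nat_mult[symmetric] mult.commute)
    finally show ?thesis using y by (intro divide_right_mono mult_left_mono) auto
  qed
  also have "\<dots> = (1 - y) * (\<Sum>i<M. (1 - y) ^ i)"
    using y by (simp add: sum_gp_strict)
  also have "\<dots> = (\<Sum>i<M. (1 - y) ^ Suc i)"
    by (simp add: sum_distrib_left)
  also have "\<dots> \<le> (\<Sum>i<M. part_fun (K - Suc i) b) / part_fun K b"
  proof -
    have "(\<Sum>i<M. (1 - y) ^ Suc i * part_fun K b) \<le> (\<Sum>i<M. part_fun (K - Suc i) b)"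
    proof (rule sum_mono)
      fix i assume "i \<in> {..<M}"
      then show "(1 - y) ^ Suc i * part_fun K b \<le> part_fun (K - Suc i) b"
        unfolding y_def by (intro Z_low[OF b _ M]) simp
    qed
    moreover have "(\<Sum>i<M. (1 - y) ^ Suc i * part_fun K b) = (\<Sum>i<M. (1 - y) ^ Suc i) * part_fun K b"
      by (simp add: sum_distrib_right)
    ultimately show ?thesis using ZK by (simp add: pos_le_divide_eq del: power_Suc)
  qed
  also have "\<dots> \<le> (\<Sum>i<K. part_fun (K - Suc i) b) / part_fun K b"
  proof (rule divide_right_mono)
    show "(\<Sum>i<M. part_fun (K - Suc i) b) \<le> (\<Sum>i<K. part_fun (K - Suc i) b)"
      using M Z_pos[OF b] by (intro sum_mono2) (auto intro: less_imp_le)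
  qed (use ZK in auto)
  also have "\<dots> = mean_n0 K b"
    unfolding mean_eq[OF b] sum.nat_diff_reindex[where g="\<lambda>j. part_fun j b"] ..
  finally show ?thesis .
qed



lemma t1: fixes a c :: real assumes "0<a" "a<1" "c = (1+a)/2"
  shows "\<forall>\<^sub>F N in sequentially. real N powr c + real N / ln (real N) \<le> real N"
  using assms by real_asymp

lemma t2: fixes a c :: real assumes "0<a" "a<1" "c = (1+a)/2"
  shows "((\<lambda>N. a * ln (real N) / real N * real N powr c) \<longlongrightarrow> 0) sequentially"
  using assms by real_asymp

lemma t3: fixes a c :: real assumes "0<a" "a<1" "c = (1+a)/2"
  shows "filterlim (\<lambda>N. real N powr (-a) * (real N powr c - 1)) at_top sequentially"
  using assms by real_asymp

lemma t4: fixes a :: real assumes "0<a" 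
  shows "((\<lambda>N. real N powr (-a)) \<longlongrightarrow> 0) sequentially"
  using assms by real_asymp


theorem corollary3:
  fixes a :: real and S :: "nat \<Rightarrow> int"
  assumes "0 < a" and "a < 1"
    and "\<forall>N. int N + S N \<ge> 0"
    and "(\<lambda>N. real_of_int (S N)) \<in> o(\<lambda>N. real N / ln (real N))"
  shows "(\<lambda>N. real N powr (- a) * mean_n0 (nat (int N + S N)) (a * ln (real N) / real N))
           \<longlonglongrightarrow> 1"
proof -
  note a = assms(1,2)
  define c where "c = (1 + a) / 2"
  define K where "K N = nat (int N + S N)" for N
  define b where "b N = a * ln (real N) / real N" for N
  define s where "s N = a * (real_of_int (S N) / (real N / ln (real N)))" for N
  define M where "M N = nat \<lfloor>real N powr c\<rfloor>" for N
  define y where "y N = exp (- b N * real (K N - M N))" for N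
  define L where "L N = exp (s N - b N * real (M N)) * (1 - y N) * (1 - exp (- y N * real (M N)))" for N
  have realK: "real (K N) = real N + real_of_int (S N)" for N
    using assms(3) by (simp add: K_def)
  have s0: "s \<longlonglongrightarrow> 0"
    unfolding s_def using tendsto_mult_right_zero[OF smalloD_tendsto[OF assms(4)], of a] by simp
  have Mle: "real (M N) \<le> real N powr c" for N
    by (simp add: M_def)
  have Mge: "real N powr c - 1 \<le> real (M N)" for N
    by (simp add: M_def)
  have ev3: "\<forall>\<^sub>F N in sequentially. N \<ge> 3" by (rule eventually_ge_at_top)
  have evs: "\<forall>\<^sub>F N in sequentially. \<bar>s N\<bar> < a"
    using s0 a(1) by (simp add: tendsto_iff)
  have evMK: "\<forall>\<^sub>F N in sequentially. M N \<le> K N"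
    using ev3 evs t1[OF a c_def]
  proof eventually_elim
    case (elim N)
    have lnN: "ln (real N) > 0" using elim(1) by simp
    have "\<bar>real_of_int (S N)\<bar> * ln (real N) / real N < 1"
      using elim(2) a(1) lnN elim(1) by (simp add: s_def abs_mult field_simps)
    then have "\<bar>real_of_int (S N)\<bar> < real N / ln (real N)"
      using lnN elim(1) by (simp add: field_simps)
    then have "real (M N) \<le> real (K N)"
      using Mle[of N] elim(3) realK[of N] by linarith
    then show ?case by simp
  qed
  have bM0: "(\<lambda>N. b N * real (M N)) \<longlonglongrightarrow> 0"
  proof (rule tendsto_sandwich[OF _ _ tendsto_const t2[OF a c_def]])
    show "\<forall>\<^sub>F N in sequentially. 0 \<le> b N * real (M N)"
      using ev3 by eventually_elim (use a in \<open>simp add: b_def\<close>)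
    show "\<forall>\<^sub>F N in sequentially. b N * real (M N) \<le> a * ln (real N) / real N * real N powr c"
      using ev3
    proof eventually_elim
      case (elim N)
      have "0 \<le> b N" using elim a by (simp add: b_def)
      then show ?case using Mle[of N] mult_left_mono unfolding b_def by blast
    qed
  qed
  have yform: "\<forall>\<^sub>F N in sequentially. y N = real N powr (- a) * exp (- s N + b N * real (M N))"
    using ev3 evMK
  proof eventually_elim
    case (elim N)
    have "b N * real (K N - M N) = b N * real (K N) - b N * real (M N)"
      using elim(2) by (simp add: of_nat_diff algebra_simps)
    also have "b N * real (K N) = a * ln (real N) + s N"
      using elim(1) by (simp add: b_def s_def realK field_simps)
    finally have "- b N * real (K N - M N) = - a * ln (real N) + (- s N + b N * real (M N))"
      by simp
    then show ?case using elim(1)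
      by (simp add: y_def powr_def mult_exp_exp)
  qed
  have y0: "y \<longlonglongrightarrow> 0"
  proof -
    have "(\<lambda>N. real N powr (- a) * exp (- s N + b N * real (M N))) \<longlonglongrightarrow> 0 * exp (- 0 + 0)"
      by (intro tendsto_intros t4 a s0 bM0)
    then show ?thesis using yform by (simp add: tendsto_cong)
  qed
  have yM: "filterlim (\<lambda>N. y N * real (M N)) at_top sequentially"
  proof (rule filterlim_at_top_mono)
    have "(\<lambda>N. exp (- s N + b N * real (M N))) \<longlonglongrightarrow> exp (- 0 + 0)"
      by (intro tendsto_intros s0 bM0)
    then show "filterlim (\<lambda>N. exp (- s N + b N * real (M N)) * (real N powr (- a) * (real N powr c - 1))) at_top sequentially"
      by (intro filterlim_tendsto_pos_mult_at_top[OF _ _ t3[OF a c_def]]) auto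
    show "\<forall>\<^sub>F N in sequentially. exp (- s N + b N * real (M N)) * (real N powr (- a) * (real N powr c - 1)) \<le> y N * real (M N)"
      using yform
    proof eventually_elim
      case (elim N)
      have "real N powr (- a) * (real N powr c - 1) \<le> real N powr (- a) * real (M N)"
        using Mge[of N] by (intro mult_left_mono) auto
      then have "exp (- s N + b N * real (M N)) * (real N powr (- a) * (real N powr c - 1)) \<le> exp (- s N + b N * real (M N)) * (real N powr (- a) * real (M N))"
        by (rule mult_left_mono) auto
      then show ?case using elim by (simp add: mult.assoc mult.left_commute)
    qed
  qed
  have eyM: "(\<lambda>N. exp (- y N * real (M N))) \<longlonglongrightarrow> 0"
  proof -
    have "filterlim (\<lambda>N. - (y N * real (M N))) at_bot sequentially"
      using yM by (simp add: filterlim_uminus_at_bot)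
    then show ?thesis using filterlim_compose[OF exp_at_bot] by simp
  qed
  have L1: "L \<longlonglongrightarrow> 1"
  proof -
    have "L \<longlonglongrightarrow> exp (0 - 0) * (1 - 0) * (1 - 0)"
      unfolding L_def by (intro tendsto_intros s0 bM0 y0 eyM)
    then show ?thesis by simp
  qed
  have U1: "(\<lambda>N. exp (s N)) \<longlonglongrightarrow> 1"
    using tendsto_exp[OF s0] by simp
  show ?thesis
  proof (rule tendsto_sandwich[OF _ _ L1 U1])
    show "\<forall>\<^sub>F N in sequentially. L N \<le> real N powr (- a) * mean_n0 (nat (int N + S N)) (a * ln (real N) / real N)"
      using ev3 evMK
    proof eventually_elim
      case (elim N)
      have bpos: "b N > 0" using elim(1) a by (simp add: b_def)
      have ypos: "y N > 0" by (simp add: y_def)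
      have "b N * real (K N - M N) = b N * real (K N) - b N * real (M N)"
        using elim(2) by (simp add: of_nat_diff algebra_simps)
      also have "b N * real (K N) = a * ln (real N) + s N"
        using elim(1) by (simp add: b_def s_def realK field_simps)
      finally have hh: "b N * real (K N - M N) = a * ln (real N) + (s N - b N * real (M N))"
        by simp
      have "real N powr (- a) / y N = exp (- a * ln (real N)) / exp (- a * ln (real N) - (s N - b N * real (M N)))"
        using elim(1) by (simp add: powr_def y_def hh)
      also have "\<dots> = exp (s N - b N * real (M N))"
        by (simp flip: exp_diff)
      finally have e1: "real N powr (- a) / y N = exp (s N - b N * real (M N))" .
      have "L N = real N powr (- a) * ((1 - y N) * (1 - exp (- y N * real (M N))) / y N)"
        unfolding L_def e1[symmetric] by (simp add: field_simps)
      also have "\<dots> \<le> real N powr (- a) * mean_n0 (K N) (b N)"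
        using mean_lower[OF bpos elim(2)] by (intro mult_left_mono) (auto simp: y_def)
      finally show ?case by (simp add: K_def b_def)
    qed
    show "\<forall>\<^sub>F N in sequentially. real N powr (- a) * mean_n0 (nat (int N + S N)) (a * ln (real N) / real N) \<le> exp (s N)"
      using ev3
    proof eventually_elim
      case (elim N)
      have bpos: "b N > 0" using elim(1) a by (simp add: b_def)
      have "real N powr (- a) * mean_n0 (K N) (b N) \<le> real N powr (- a) * exp (b N * real (K N))"
        using mean_upper[OF bpos] by (intro mult_left_mono) auto
      also have "b N * real (K N) = a * ln (real N) + s N"
        using elim(1) by (simp add: b_def s_def realK field_simps)
      also have "real N powr (- a) * exp (a * ln (real N) + s N) = exp (s N)"
        using elim(1) by (simp add: powr_def exp_add flip: exp_add)
      finally show ?case by (simp add: K_def b_def)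
    qed
  qed
qed


end
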